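(* Let $g\in C(\mathbb{R},\mathbb{R})$ and $\mathcal{G}=(g,\infty)=\{f\in C(\mathbb{R},\mathbb{R}):(\forall x\in\mathbb{R})\,f(x)>g(x)\}$. Then $\mathcal{K}_\mathcal{G}=\{\mathrm{CL}(\mathbb{R})\cap\mathcal{P}(X):X\subseteq\mathbb{R}\}$.
   Context: $\mathrm{CL}(\mathbb{R})$ is the family of closed subsets of $\mathbb{R}$ and $\mathcal{P}(X)$ the power set of $X$. For $\mathcal{G}\subseteq C(\mathbb{R},\mathbb{R})$ let $R_\mathcal{G}=\{(f,E)\in C(\mathbb{R},\mathbb{R})\times\mathrm{CL}(\mathbb{R}):(\exists h\in\mathcal{G})\, f\restriction E=h\restriction E\}$; for $\mathcal{F}\subseteq C(\mathbb{R},\mathbb{R})$ put $E_\mathcal{G}(\mathcal{F})=\{E\in\mathrm{CL}(\mathbb{R}):(\forall f\in\mathcal{F})\,(f,E)\in R_\mathcal{G}\}$, and let $\mathcal{K}_\mathcal{G}=\{E_\mathcal{G}(\mathcal{F}):\mathcal{F}\subseteq C(\mathbb{R},\mathbb{R})\}$. *)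

theory Defs
  imports "HOL-Analysis.Analysis"
begin

definition CRR :: "(real \<Rightarrow> real) set" where
  "CRR = {f. continuous_on UNIV f}"

definition CLR :: "real set set" where
  "CLR = {E. closed E}"

definition R_G :: "(real \<Rightarrow> real) set \<Rightarrow> ((real \<Rightarrow> real) \<times> real set) set" where
  "R_G G = {(f, E). f \<in> CRR \<and> E \<in> CLR \<and> (\<exists>h\<in>G. \<forall>x\<in>E. f x = h x)}"

definition E_G :: "(real \<Rightarrow> real) set \<Rightarrow> (real \<Rightarrow> real) set \<Rightarrow> real set set" where
  "E_G G F = {E \<in> CLR. \<forall>f\<in>F. (f, E) \<in> R_G G}"

definition K_G :: "(real \<Rightarrow> real) set \<Rightarrow> real set set set" where
  "K_G G = {E_G G F | F. F \<subseteq> CRR}"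

end

theory Submission
  imports Defs
begin

lemma RG_iff:
  assumes g: "g \<in> CRR" and f: "f \<in> CRR" and E: "closed E"
  shows "(f, E) \<in> R_G {f \<in> CRR. \<forall>x. f x > g x} \<longleftrightarrow> (\<forall>x\<in>E. f x > g x)"
proof
  assume "(f, E) \<in> R_G {f \<in> CRR. \<forall>x. f x > g x}"
  then show "\<forall>x\<in>E. f x > g x" unfolding R_G_def by auto
next
  assume pos: "\<forall>x\<in>E. f x > g x"
  have gc: "continuous_on UNIV g" and fc: "continuous_on UNIV f" using g f by (auto simp: CRR_def)
  show "(f, E) \<in> R_G {f \<in> CRR. \<forall>x. f x > g x}"
  proof (cases "E = {}")
    case True
    have "(\<lambda>x. g x + 1) \<in> CRR" using gc by (auto simp: CRR_def intro!: continuous_intros)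
    then show ?thesis using True f E by (auto simp: R_G_def CLR_def)
  next
    case False
    define h where "h = (\<lambda>x. max (f x) (g x + infdist x E))"
    have "h \<in> CRR" unfolding h_def CRR_def using gc fc
      by (auto intro!: continuous_intros continuous_on_infdist)
    moreover have "\<forall>x. h x > g x"
    proof
      fix x show "h x > g x"
      proof (cases "x \<in> E")
        case True then show ?thesis using pos by (auto simp: h_def)
      next
        case False
        then have "infdist x E > 0" using infdist_pos_not_in_closed[OF E] \<open>E \<noteq> {}\<close> by blast
        then show ?thesis by (auto simp: h_def)
      qed
    qed
    moreover have "\<forall>x\<in>E. f x = h x" using pos by (auto simp: h_def infdist_zero max_def)
    ultimately show ?thesis using f E by (auto simp: R_G_def CLR_def)
  qed
qed

lemma EG_eq:
  assumes g: "g \<in> CRR" and F: "F \<subseteq> CRR"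
  shows "E_G {f \<in> CRR. \<forall>x. f x > g x} F = CLR \<inter> Pow {x. \<forall>f\<in>F. f x > g x}"
  using RG_iff[OF g] F unfolding E_G_def CLR_def by blast

theorem theorem4p1:
  fixes g :: "real \<Rightarrow> real"
  assumes "g \<in> CRR"
  shows "K_G {f \<in> CRR. \<forall>x. f x > g x} = {CLR \<inter> Pow X | X. X \<subseteq> (UNIV :: real set)}"
proof
  show "K_G {f \<in> CRR. \<forall>x. f x > g x} \<subseteq> {CLR \<inter> Pow X | X. X \<subseteq> (UNIV :: real set)}"
    unfolding K_G_def using EG_eq[OF assms] by blast
next
  show "{CLR \<inter> Pow X | X. X \<subseteq> (UNIV :: real set)} \<subseteq> K_G {f \<in> CRR. \<forall>x. f x > g x}"
  proof
    fix S assume "S \<in> {CLR \<inter> Pow X | X. X \<subseteq> (UNIV :: real set)}"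
    then obtain X where S: "S = CLR \<inter> Pow X" by blast
    define F where "F = {(\<lambda>t. g t + \<bar>t - a\<bar>) | a. a \<notin> X}"
    have gc: "continuous_on UNIV g" using assms by (auto simp: CRR_def)
    have FC: "F \<subseteq> CRR" unfolding F_def CRR_def using gc
      by (auto intro!: continuous_intros)
    have "{x. \<forall>f\<in>F. f x > g x} = X"
    proof
      show "{x. \<forall>f\<in>F. f x > g x} \<subseteq> X"
      proof
        fix x assume A: "x \<in> {x. \<forall>f\<in>F. f x > g x}"
        show "x \<in> X"
        proof (rule ccontr)
          assume "x \<notin> X"
          then have "(\<lambda>t. g t + \<bar>t - x\<bar>) \<in> F" unfolding F_def by blast
          from bspec[OF A[simplified] this] show False by simp
        qed
      qed
      show "X \<subseteq> {x. \<forall>f\<in>F. f x > g x}" unfolding F_def by auto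
    qed
    then have "S = E_G {f \<in> CRR. \<forall>x. f x > g x} F" using EG_eq[OF assms FC] S by simp
    then show "S \<in> K_G {f \<in> CRR. \<forall>x. f x > g x}" unfolding K_G_def using FC by blast
  qed
qed

end
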